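(* Fix $\eta,\theta>0$, $N\ge1$, $t\ge0$. (i) If $F(s)=\int_0^s f(u)\,\mathrm{d}u$ for a piecewise continuous $f:\mathbb{R}_+\to\mathbb{R}$, then \[ E^{(\eta,\theta)}_{N,t}[F]=\sum_{j=1}^N h^{(f)}_j(t,\eta,\theta)+F(t). \] (ii) $E^{(\eta,\theta)}_{N,t}$ is a positive measure on $[0,t]$ of total mass at most $1$; in particular $|E^{(\eta,\theta)}_{N,t}[F]|\le\|F\|_\infty$ for all bounded measurable $F$. (iii) If $f\ge0$ then $h^{(f)}_j(t',\eta,\theta)\le0$ for all $j$ and all $t'\ge0$.
   Context: Let $V$ be of O'Connell–Yor type: $V\ge0$ smooth convex, and for some $c,C,c_0>0$: $V(x)\ge c|x|^2$ for $x\le -C$, $V'\le 0$, and $c_0V''\le -V'''\le c_0^{-1}V''+C\mathbf{1}_{\{x\ge -C\}}$. Let $\nu_\theta$ have density proportional to $\mathrm{e}^{-\theta x-V(x)}$, $F_\theta(x)=\nu_\theta((-\infty,x])$. Let $B_0,\dots,B_N$ be independent standard Brownian motions, $q_1,\dots,q_N$ i.i.d. uniform on $(0,1)$ independent of them, and for $\eta,\theta>0$ let $u_j(t)=u_j(t,\eta,\theta)$ solve $\mathrm{d}u_1=-V'(u_1)\mathrm{d}t-\theta\mathrm{d}t+\mathrm{d}B_0+\mathrm{d}B_1$, $\mathrm{d}u_j=(V'(u_{j-1})-V'(u_j))\mathrm{d}t+\mathrm{d}B_j-\mathrm{d}B_{j-1}$, with $u_j(0)=F_\eta^{-1}(q_j)$.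 Pseudo-Gibbs measure: for bounded measurable $F:[0,\infty)\to\mathbb{R}$ define recursively $E^{(\eta,\theta)}_{0,t}[F]=F(t)$ and, for $n\ge1$, \[ E^{(\eta,\theta)}_{n,t}[F]=\int_0^t\exp\Big(-\int_s^tV''(u_n(r))\,\mathrm{d}r\Big)V''(u_n(s))\,E^{(\eta,\theta)}_{n-1,s}[F]\,\mathrm{d}s ; \] equivalently $E^{(\eta,\theta)}_{N,t}[F]=\int_{0<s_0<\dots<s_{N-1}<t}\exp\big(-\sum_{j=0}^{N-1}\int_{s_j}^{s_{j+1}}V''(u_{j+1}(r))\mathrm{d}r\big)F(s_0)\prod_{j=0}^{N-1}V''(u_{j+1}(s_j))\,\mathrm{d}s$ with $s_N=t$, a (random) measure acting on functions of the variable $s_0$. For piecewise continuous $f$, let $h^{(f)}_j(t)=h^{(f)}_j(t,\eta,\theta)$ solve $\partial_th^{(f)}_1=-V''(u_1)h^{(f)}_1-f(t)$, $\partial_th^{(f)}_j=-V''(u_j)h^{(f)}_j+V''(u_{j-1})h^{(f)}_{j-1}$ ($j\ge2$), with $h^{(f)}_j(0)=0$. *)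

theory Defs
  imports "HOL-Analysis.Analysis"
begin

definition oy_type :: "(real \<Rightarrow> real) \<Rightarrow> (real \<Rightarrow> real) \<Rightarrow> (real \<Rightarrow> real) \<Rightarrow> (real \<Rightarrow> real) \<Rightarrow> bool" where
  "oy_type V V1 V2 V3 \<longleftrightarrow>
     (\<forall>k x. ((deriv ^^ k) V) differentiable (at x)) \<and>
     (\<forall>x. (V has_real_derivative V1 x) (at x)) \<and>
     (\<forall>x. (V1 has_real_derivative V2 x) (at x)) \<and>
     (\<forall>x. (V2 has_real_derivative V3 x) (at x)) \<and>
     convex_on UNIV V \<and> (\<forall>x. V x \<ge> 0) \<and> (\<forall>x. V1 x \<le> 0) \<and>
     (\<exists>c C c0. c > 0 \<and> C > 0 \<and> c0 > 0 \<and>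
        (\<forall>x. x \<le> -C \<longrightarrow> V x \<ge> c * x\<^sup>2) \<and>
        (\<forall>x. c0 * V2 x \<le> - V3 x \<and>
             - V3 x \<le> V2 x / c0 + C * (if x \<ge> -C then 1 else 0)))"

definition nu_cdf :: "(real \<Rightarrow> real) \<Rightarrow> real \<Rightarrow> real \<Rightarrow> real" where
  "nu_cdf V eta x =
     (LINT y:{..x}|lborel. exp (- eta * y - V y)) / (LINT y|lborel. exp (- eta * y - V y))"

definition piecewise_cont :: "(real \<Rightarrow> real) \<Rightarrow> bool" where
  "piecewise_cont f \<longleftrightarrow>
     (\<forall>T\<ge>0. \<exists>S. finite S \<and> continuous_on ({0..T} - S) f \<and>
        (\<forall>s\<in>S. (\<exists>l. (f \<longlongrightarrow> l) (at_left s)) \<and> (\<exists>l. (f \<longlongrightarrow> l) (at_right s))))"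

primrec pgE :: "nat \<Rightarrow> (real \<Rightarrow> real) \<Rightarrow> (nat \<Rightarrow> real \<Rightarrow> real) \<Rightarrow> real \<Rightarrow> (real \<Rightarrow> real) \<Rightarrow> real" where
  "pgE 0 V2 u t F = F t"
| "pgE (Suc n) V2 u t F =
     (LINT s:{0..t}|lborel.
        exp (- (LINT r:{s..t}|lborel. V2 (u (Suc n) r))) * V2 (u (Suc n) s) * pgE n V2 u s F)"

end

theory Submission
  imports Defs "HOL-Probability.Probability"
begin

lemma V2_nonneg:
  assumes V: "oy_type V V1 V2 V3" shows "V2 x \<ge> 0"
proof -
  have d1: "\<And>x. (V has_real_derivative V1 x) (at x)" and d2: "\<And>x. (V1 has_real_derivative V2 x) (at x)"
    and cv: "convex_on UNIV V" using V by (auto simp: oy_type_def)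
  have tan: "V y - V x \<ge> V1 x * (y - x)" for x y
    by (rule convex_on_imp_above_tangent[OF cv]) (auto intro: d1 has_field_derivative_at_within)
  have mono: "V1 x \<le> V1 y" if "x < y" for x y
  proof -
    have "V y - V x \<ge> V1 x * (y - x)" "V x - V y \<ge> V1 y * (x - y)" using tan by auto
    then have "(V1 y - V1 x) * (y - x) \<ge> 0" by (simp add: algebra_simps)
    with that show ?thesis by (simp add: zero_le_mult_iff)
  qed
  show ?thesis
  proof (rule ccontr)
    assume "\<not> ?thesis"
    then obtain d where "d > 0" "\<forall>h>0. h < d \<longrightarrow> V1 x > V1 (x + h)"
      using DERIV_neg_dec_right[OF d2[of x]] by force
    then have "V1 x > V1 (x + d/2)" by auto
    moreover have "V1 x \<le> V1 (x + d/2)" using mono \<open>d>0\<close> by auto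
    ultimately show False by simp
  qed
qed

lemma V2_cont:
  assumes V: "oy_type V V1 V2 V3" shows "continuous_on S V2"
proof -
  have "\<And>x. (V2 has_real_derivative V3 x) (at x)" using V by (auto simp: oy_type_def)
  then show ?thesis by (meson DERIV_isCont continuous_at_imp_continuous_on)
qed

lemma lint_eq_integral_cont:
  fixes g :: "real \<Rightarrow> real"
  assumes "continuous_on {a..b} g"
  shows "(LINT x:{a..b}|lborel. g x) = integral {a..b} g"
  using borel_integrable_compact[OF compact_Icc assms] by (intro set_borel_integral_eq_integral(2)) (simp add: set_integrable_def)

lemma ode_rep:
  fixes a c H :: "real \<Rightarrow> real"
  assumes t: "0 \<le> t" and ca: "continuous_on {0..t} a" and cc: "continuous_on {0..t} c"
    and cH: "continuous_on {0..t} H"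
    and eq: "\<And>s. s \<in> {0..t} \<Longrightarrow> H s = integral {0..s} (\<lambda>r. c r - a r * H r)"
  shows "H t = (LINT s:{0..t}|lborel. exp (- (LINT x:{s..t}|lborel. a x)) * c s)"
proof -
  define A where "A x = integral {0..x} a" for x
  define g where "g r = c r - a r * H r" for r
  have cg: "continuous_on {0..t} g" unfolding g_def by (intro continuous_intros ca cc cH)
  have ia: "a integrable_on {0..t}" using ca integrable_continuous_interval by blast
  have dA: "(A has_real_derivative a x) (at x within {0..t})" if "x \<in> {0..t}" for x
    using integral_has_vector_derivative[OF ca that] unfolding A_def
    by (simp add: has_real_derivative_iff_has_vector_derivative)
  have dH: "((\<lambda>u. integral {0..u} g) has_real_derivative g x) (at x within {0..t})" if "x \<in> {0..t}" for x
    using integral_has_vector_derivative[OF cg that]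
    by (simp add: has_real_derivative_iff_has_vector_derivative)
  have cA: "continuous_on {0..t} A"
    using dA by (meson DERIV_continuous continuous_at_imp_continuous_on continuous_on_eq_continuous_within)
  have Aint: "(LINT x:{s..t}|lborel. a x) = A t - A s" if "s \<in> {0..t}" for s
  proof -
    have "(LINT x:{s..t}|lborel. a x) = integral {s..t} a"
      using that by (intro lint_eq_integral_cont continuous_on_subset[OF ca]) auto
    also have "\<dots> = A t - A s" unfolding A_def
      using Henstock_Kurzweil_Integration.integral_combine[where f=a and a=0 and c=s and b=t] that ia by (auto simp: algebra_simps)
    finally show ?thesis .
  qed
  define P where "P x = exp (A x) * integral {0..x} g" for x
  have dP: "(P has_vector_derivative (exp (A x) * c x)) (at x within {0..t})" if x: "x \<in> {0..t}" for x
  proof -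
    have "(P has_real_derivative (exp (A x) * a x * integral {0..x} g + exp (A x) * g x)) (at x within {0..t})"
      unfolding P_def by (auto intro!: derivative_eq_intros dA dH x)
    moreover have "integral {0..x} g = H x" using eq[OF x] by (simp add: g_def[abs_def])
    ultimately show ?thesis by (simp add: has_real_derivative_iff_has_vector_derivative g_def algebra_simps)
  qed
  have "((\<lambda>x. exp (A x) * c x) has_integral (P t - P 0)) {0..t}"
    by (rule fundamental_theorem_of_calculus[OF t dP])
  moreover have "P 0 = 0" by (simp add: P_def)
  moreover have "P t = exp (A t) * H t" using eq[of t] t by (simp add: P_def g_def[abs_def])
  ultimately have I: "((\<lambda>x. exp (A x) * c x) has_integral exp (A t) * H t) {0..t}" by simp
  have "(LINT s:{0..t}|lborel. exp (- (LINT x:{s..t}|lborel. a x)) * c s)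
      = (LINT s:{0..t}|lborel. exp (- A t) * (exp (A s) * c s))"
    by (rule set_lebesgue_integral_cong) (auto simp: Aint exp_diff exp_minus field_simps)
  also have "\<dots> = integral {0..t} (\<lambda>s. exp (- A t) * (exp (A s) * c s))"
    by (intro lint_eq_integral_cont continuous_intros cA cc)
  also have "\<dots> = exp (- A t) * (exp (A t) * H t)"
    using has_integral_mult_right[OF I, of "exp (- A t)"] by (rule integral_unique)
  also have "\<dots> = H t" by (simp add: exp_minus field_simps)
  finally show ?thesis by simp
qed

lemma pc_bounded:
  fixes f :: "real \<Rightarrow> real"
  assumes f: "piecewise_cont f" and T: "T \<ge> 0"
  shows "\<exists>B. \<forall>x\<in>{0..T}. \<bar>f x\<bar> \<le> B"
proof -
  obtain S where S: "finite S" "continuous_on ({0..T} - S) f"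
    and lim: "\<And>s. s\<in>S \<Longrightarrow> (\<exists>l. (f \<longlongrightarrow> l) (at_left s)) \<and> (\<exists>l. (f \<longlongrightarrow> l) (at_right s))"
    using f[unfolded piecewise_cont_def, rule_format, OF T] by blast
  define M0 where "M0 = (\<Sum>s\<in>S. \<bar>f s\<bar>)"
  have inS: "\<bar>f y\<bar> \<le> M0" if "y \<in> S" for y
    unfolding M0_def using S(1) that by (intro member_le_sum) auto
  have M0: "M0 \<ge> 0" unfolding M0_def by (simp add: sum_nonneg)
  have loc: "\<exists>e>0. \<exists>B. \<forall>y\<in>{0..T}. dist y x < e \<longrightarrow> \<bar>f y\<bar> \<le> B" if x: "x \<in> {0..T}" for x
  proof (cases "x \<in> S")
    case False
    then have "x \<in> {0..T} - S" using x by auto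
    then obtain d where d: "d > 0" "\<forall>y\<in>{0..T} - S. dist y x < d \<longrightarrow> dist (f y) (f x) < 1"
      using S(2) unfolding continuous_on_iff by (meson zero_less_one)
    show ?thesis
    proof (intro exI conjI ballI impI)
      show "d > 0" by fact
      fix y assume y: "y \<in> {0..T}" "dist y x < d"
      show "\<bar>f y\<bar> \<le> \<bar>f x\<bar> + 1 + M0"
      proof (cases "y \<in> S")
        case True then show ?thesis using inS[of y] by auto
      next
        case False
        then have "dist (f y) (f x) < 1" using d y by auto
        then show ?thesis using M0 by (auto simp: dist_real_def)
      qed
    qed
  next
    case True
    then obtain l1 l2 where l1: "(f \<longlongrightarrow> l1) (at_left x)" and l2: "(f \<longlongrightarrow> l2) (at_right x)"
      using lim by blast
    have "eventually (\<lambda>y. dist (f y) l1 < 1) (at_left x)" using l1 by (simp add: tendsto_iff)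
    then obtain b1 where b1: "b1 < x" "\<forall>y>b1. y < x \<longrightarrow> dist (f y) l1 < 1"
      using eventually_at_left[of "x - 1" x] by auto
    have "eventually (\<lambda>y. dist (f y) l2 < 1) (at_right x)" using l2 by (simp add: tendsto_iff)
    then obtain b2 where b2: "b2 > x" "\<forall>y>x. y < b2 \<longrightarrow> dist (f y) l2 < 1"
      using eventually_at_right[of x "x + 1"] by auto
    show ?thesis
    proof (intro exI conjI ballI impI)
      show "min (x - b1) (b2 - x) > 0" using b1 b2 by auto
      fix y assume y: "y \<in> {0..T}" "dist y x < min (x - b1) (b2 - x)"
      show "\<bar>f y\<bar> \<le> \<bar>l1\<bar> + 1 + (\<bar>l2\<bar> + 1) + \<bar>f x\<bar>"
      proof (cases y x rule: linorder_cases)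
        case less
        then have "dist (f y) l1 < 1" using b1 y by (auto simp: dist_real_def)
        then show ?thesis by (auto simp: dist_real_def)
      next
        case equal then show ?thesis by simp
      next
        case greater
        then have "dist (f y) l2 < 1" using b2 y by (auto simp: dist_real_def)
        then show ?thesis by (auto simp: dist_real_def)
      qed
    qed
  qed
  have "\<forall>x\<in>{0..T}. \<exists>p. fst p > 0 \<and> (\<forall>y\<in>{0..T}. dist y x < fst p \<longrightarrow> \<bar>f y\<bar> \<le> snd p)"
  proof
    fix x assume "x \<in> {0..T}"
    from loc[OF this] obtain e B where "e > 0" "\<forall>y\<in>{0..T}. dist y x < e \<longrightarrow> \<bar>f y\<bar> \<le> B" by blast
    then show "\<exists>p. fst p > 0 \<and> (\<forall>y\<in>{0..T}. dist y x < fst p \<longrightarrow> \<bar>f y\<bar> \<le> snd p)"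
      by (intro exI[of _ "(e, B)"]) simp
  qed
  from bchoice[OF this] obtain p where p: "\<forall>x\<in>{0..T}. fst (p x) > 0 \<and> (\<forall>y\<in>{0..T}. dist y x < fst (p x) \<longrightarrow> \<bar>f y\<bar> \<le> snd (p x))"
    by blast
  define e where "e x = fst (p x)" for x
  define B where "B x = snd (p x)" for x
  have eB: "\<And>x. x \<in> {0..T} \<Longrightarrow> e x > 0 \<and> (\<forall>y\<in>{0..T}. dist y x < e x \<longrightarrow> \<bar>f y\<bar> \<le> B x)"
    using p unfolding e_def B_def by blast
  have cov: "{0..T} \<subseteq> (\<Union>c\<in>{0..T}. ball c (e c))"
  proof
    fix x assume "x \<in> {0..T}" then show "x \<in> (\<Union>c\<in>{0..T}. ball c (e c))"
      using eB[of x] by (intro UN_I[of x]) auto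
  qed
  obtain K where K: "K \<subseteq> {0..T}" "finite K" "{0..T} \<subseteq> (\<Union>c\<in>K. ball c (e c))"
    using compactE_image[of "{0..T}" "{0..T}" "\<lambda>c. ball c (e c)", OF compact_Icc _ cov] by blast
  show ?thesis
  proof (intro exI ballI)
    fix y assume y: "y \<in> {0..T}"
    then obtain c where c: "c \<in> K" "y \<in> ball c (e c)" using K by auto
    have cT: "c \<in> {0..T}" using c K by blast
    have "dist y c < e c" using c(2) by (simp add: dist_commute)
    moreover have "\<forall>y\<in>{0..T}. dist y c < e c \<longrightarrow> \<bar>f y\<bar> \<le> B c" using eB[OF cT] by (rule conjunct2)
    ultimately have "\<bar>f y\<bar> \<le> B c" using y by blast
    also have "\<dots> \<le> \<bar>B c\<bar>" by (rule abs_ge_self)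
    also have "\<dots> \<le> (\<Sum>k\<in>K. \<bar>B k\<bar>)" by (rule member_le_sum) (use c(1) K(2) in auto)
    finally show "\<bar>f y\<bar> \<le> (\<Sum>k\<in>K. \<bar>B k\<bar>)" .
  qed
qed

lemma pc_integrable:
  fixes f :: "real \<Rightarrow> real"
  assumes f: "piecewise_cont f" and T: "T \<ge> 0"
  shows "f integrable_on {0..T}"
proof -
  obtain S where S: "finite S" "continuous_on ({0..T} - S) f"
    using f T unfolding piecewise_cont_def by blast
  obtain B where B: "\<forall>x\<in>{0..T}. \<bar>f x\<bar> \<le> B" using pc_bounded[OF f T] by blast
  have L: "{0..T} - S \<in> sets lebesgue"
    by (rule sets.Diff, simp, rule negligible_imp_sets, rule negligible_finite, rule S(1))
  have "f \<in> borel_measurable (lebesgue_on ({0..T} - S))"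
    using S(2) L by (rule continuous_imp_measurable_on_sets_lebesgue)
  then have "f measurable_on ({0..T} - S)"
    by (subst measurable_on_iff_borel_measurable[OF L])
  then have "f measurable_on {0..T}"
    by (rule measurable_on_spike_set) (auto intro: negligible_subset[OF negligible_finite[OF S(1)]])
  then have m: "f \<in> borel_measurable (lebesgue_on {0..T})"
    by (subst (asm) measurable_on_iff_borel_measurable) simp
  show ?thesis
  proof (rule measurable_bounded_by_integrable_imp_integrable_real[OF m, of "\<lambda>_. B"])
    show "(\<lambda>_. B) integrable_on {0..T}" by (rule integrable_const_ivl)
    show "\<bar>f x\<bar> \<le> B" if "x \<in> {0..T}" for x using B that by blast
  next
    show "{0..T} \<in> sets lebesgue"
      using lmeasurable_cbox[THEN fmeasurableD, of 0 T] by (simp add: cbox_interval)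
  qed
qed

definition ak :: "(real \<Rightarrow> real) \<Rightarrow> (nat \<Rightarrow> real \<Rightarrow> real) \<Rightarrow> nat \<Rightarrow> real \<Rightarrow> real" where
  "ak Vpp u k x = indicator {0..} x * Vpp (u k x)"

definition Wk :: "(real \<Rightarrow> real) \<Rightarrow> (nat \<Rightarrow> real \<Rightarrow> real) \<Rightarrow> nat \<Rightarrow> real \<Rightarrow> real \<Rightarrow> real" where
  "Wk Vpp u k t s = indicator {0..t} s * (exp (- (LINT x:{s..t}|lborel. ak Vpp u k x)) * ak Vpp u k s)"

lemma ak_meas:
  assumes "continuous_on {0..} (u k)" "continuous_on UNIV Vpp"
  shows "ak Vpp u k \<in> borel_measurable borel"
proof -
  have "continuous_on {0..} (\<lambda>x. Vpp (u k x))"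
    using assms by (intro continuous_on_compose2[OF assms(2) assms(1)]) auto
  then have "(\<lambda>x. indicator {0..} x *\<^sub>R Vpp (u k x)) \<in> borel_measurable borel"
    by (intro borel_measurable_continuous_on_indicator) auto
  then show ?thesis unfolding ak_def[abs_def] by simp
qed

lemma ind_Icc: "indicator {a..b} x = (if a \<le> x \<and> x \<le> (b::real) then 1 else (0::real))"
  by (auto simp: indicator_def)

lemma W_meas:
  assumes "continuous_on {0..} (u k)" "continuous_on UNIV Vpp"
  shows "(\<lambda>(t, s). Wk Vpp u k t s) \<in> borel_measurable (borel \<Otimes>\<^sub>M borel)"
proof -
  note [measurable] = ak_meas[where u=u and k=k and Vpp=Vpp, OF assms]
  show ?thesis
    unfolding Wk_def[abs_def] set_lebesgue_integral_def ind_Icc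
    by measurable
qed

lemma integral_bind_nonneg_bounded:
  fixes G :: "'b \<Rightarrow> real"
  assumes K: "K \<in> measurable M (subprob_algebra N)" and M: "subprob_space M"
    and G: "G \<in> borel_measurable N" and B: "\<And>x. 0 \<le> G x" "\<And>x. G x \<le> B"
  shows "integral\<^sup>L (M \<bind> K) G = (\<integral>x. integral\<^sup>L (K x) G \<partial>M)"
proof -
  have ne: "space M \<noteq> {}" using M subprob_space.subprob_not_empty by blast
  have sb: "sets (M \<bind> K) = sets N" using sets_kernel[OF K] ne by (rule sets_bind)
  have Gm: "G \<in> borel_measurable (M \<bind> K)" using G sb by (simp cong: measurable_cong_sets)
  have inner: "(\<integral>\<^sup>+y. ennreal (G y) \<partial>K x) = ennreal (integral\<^sup>L (K x) G)" if x: "x \<in> space M" for x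
  proof -
    interpret subprob_space "K x" using subprob_space_kernel[OF K x] .
    have GK: "G \<in> borel_measurable (K x)" using G sets_kernel[OF K x] by (simp cong: measurable_cong_sets)
    have "integrable (K x) G"
      by (rule integrable_const_bound[where B=B]) (use B GK in auto)
    then show ?thesis by (rule nn_integral_eq_integral) (use B in auto)
  qed
  have im: "(\<lambda>x. integral\<^sup>L (K x) G) \<in> borel_measurable M"
    using measurable_compose[OF K integral_measurable_subprob_algebra[OF G]] by simp
  have "integral\<^sup>L (M \<bind> K) G = enn2real (\<integral>\<^sup>+ y. ennreal (G y) \<partial>(M \<bind> K))"
    by (rule integral_eq_nn_integral[OF Gm]) (use B in auto)
  also have "\<dots> = enn2real (\<integral>\<^sup>+x. \<integral>\<^sup>+y. ennreal (G y) \<partial>K x \<partial>M)"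
    by (subst nn_integral_bind[OF _ K]) (use G in auto)
  also have "\<dots> = enn2real (\<integral>\<^sup>+x. ennreal (integral\<^sup>L (K x) G) \<partial>M)"
    by (intro arg_cong[where f=enn2real] nn_integral_cong inner) simp
  also have "\<dots> = (\<integral>x. integral\<^sup>L (K x) G \<partial>M)"
    by (rule integral_eq_nn_integral[OF im, symmetric]) (use B in \<open>auto intro!: integral_nonneg_AE\<close>)
  finally show ?thesis .
qed

lemma integral_bind_bounded:
  fixes F :: "'b \<Rightarrow> real"
  assumes K: "K \<in> measurable M (subprob_algebra N)" and M: "subprob_space M"
    and F: "F \<in> borel_measurable N" and B: "\<And>x. \<bar>F x\<bar> \<le> B"
  shows "integral\<^sup>L (M \<bind> K) F = (\<integral>x. integral\<^sup>L (K x) F \<partial>M)"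
proof -
  define G1 where "G1 x = max (F x) 0" for x
  define G2 where "G2 x = max (- F x) 0" for x
  have FG: "F x = G1 x - G2 x" for x by (auto simp: G1_def G2_def)
  have G1m: "G1 \<in> borel_measurable N" and G2m: "G2 \<in> borel_measurable N"
    unfolding G1_def[abs_def] G2_def[abs_def] using F by measurable
  have b1: "0 \<le> G1 x" "G1 x \<le> B" and b2: "0 \<le> G2 x" "G2 x \<le> B" for x
    using B[of x] by (auto simp: G1_def G2_def)
  have ne: "space M \<noteq> {}" using M subprob_space.subprob_not_empty by blast
  have sb: "sets (M \<bind> K) = sets N" using sets_kernel[OF K] ne by (rule sets_bind)
  have sMK: "subprob_space (M \<bind> K)" by (rule subprob_space_bind[OF M K])
  have intb: "integrable L G" if "subprob_space L" "sets L = sets N" "G \<in> borel_measurable N"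
    "\<And>x. \<bar>G x\<bar> \<le> B" for L and G :: "'b \<Rightarrow> real"
  proof -
    interpret subprob_space L by fact
    show ?thesis by (rule integrable_const_bound[where B=B]) (use that in \<open>auto cong: measurable_cong_sets\<close>)
  qed
  have "integral\<^sup>L (M \<bind> K) F = integral\<^sup>L (M \<bind> K) G1 - integral\<^sup>L (M \<bind> K) G2"
    unfolding FG[abs_def] by (rule Bochner_Integration.integral_diff; rule intb[OF sMK sb]) (use G1m G2m b1 b2 in auto)
  also have "\<dots> = (\<integral>x. integral\<^sup>L (K x) G1 \<partial>M) - (\<integral>x. integral\<^sup>L (K x) G2 \<partial>M)"
    using integral_bind_nonneg_bounded[OF K M G1m b1] integral_bind_nonneg_bounded[OF K M G2m b2] by simp
  also have "\<dots> = (\<integral>x. integral\<^sup>L (K x) G1 - integral\<^sup>L (K x) G2 \<partial>M)"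
  proof (rule Bochner_Integration.integral_diff[symmetric])
    have "(\<lambda>x. integral\<^sup>L (K x) G) \<in> borel_measurable M" if "G \<in> borel_measurable N" for G :: "'b \<Rightarrow> real"
      using measurable_compose[OF K integral_measurable_subprob_algebra[OF that]] by simp
    moreover have "\<bar>integral\<^sup>L (K x) G\<bar> \<le> B" if "x \<in> space M" "\<And>y. 0 \<le> G y" "\<And>y. G y \<le> B"
      "G \<in> borel_measurable N" for x and G :: "'b \<Rightarrow> real"
    proof -
      interpret subprob_space "K x" using subprob_space_kernel[OF K that(1)] .
      have GK: "G \<in> borel_measurable (K x)" using that(4) sets_kernel[OF K that(1)] by (simp cong: measurable_cong_sets)
      have "integral\<^sup>L (K x) G \<le> integral\<^sup>L (K x) (\<lambda>_. B)"
        by (rule integral_mono) (use that GK in \<open>auto intro!: integrable_const_bound[where B=B]\<close>)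
      also have "\<dots> = B * measure (K x) (space (K x))" by simp
      also have "\<dots> \<le> B" using that(2)[of undefined] that(3)[of undefined] subprob_measure_le_1
        by (simp add: mult_left_le)
      finally have "integral\<^sup>L (K x) G \<le> B" .
      moreover have "0 \<le> integral\<^sup>L (K x) G" using that by (intro integral_nonneg_AE) auto
      ultimately show ?thesis by simp
    qed
    ultimately show "integrable M (\<lambda>x. integral\<^sup>L (K x) G1)" "integrable M (\<lambda>x. integral\<^sup>L (K x) G2)"
      using G1m G2m b1 b2 M
      by (auto intro!: finite_measure.integrable_const_bound[where B=B] subprob_space.axioms(1))
  qed
  also have "\<dots> = (\<integral>x. integral\<^sup>L (K x) F \<partial>M)"
  proof (rule Bochner_Integration.integral_cong[OF refl])
    fix x assume x: "x \<in> space M"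
    have sK: "subprob_space (K x)" using subprob_space_kernel[OF K x] .
    show "integral\<^sup>L (K x) G1 - integral\<^sup>L (K x) G2 = integral\<^sup>L (K x) F"
      unfolding FG[abs_def]
      by (rule Bochner_Integration.integral_diff[symmetric]; rule intb[OF sK sets_kernel[OF K x]]) (use G1m G2m b1 b2 in auto)
  qed
  finally show ?thesis .
qed

lemma lint_A:
  fixes a :: "real \<Rightarrow> real"
  assumes "0 \<le> s" "s \<le> t" "continuous_on {0..t} a"
  shows "(LINT x:{s..t}|lborel. a x) = integral {0..t} a - integral {0..s} a"
proof -
  have "(LINT x:{s..t}|lborel. a x) = integral {s..t} a"
    using assms by (intro lint_eq_integral_cont continuous_on_subset[OF assms(3)]) auto
  also have "\<dots> = integral {0..t} a - integral {0..s} a"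
    using Henstock_Kurzweil_Integration.integral_combine[where f=a and a=0 and c=s and b=t] assms
      integrable_continuous_interval[OF assms(3)] by (auto simp: algebra_simps)
  finally show ?thesis .
qed

definition Dk :: "(real \<Rightarrow> real) \<Rightarrow> (nat \<Rightarrow> real \<Rightarrow> real) \<Rightarrow> nat \<Rightarrow> real \<Rightarrow> real measure" where
  "Dk Vpp u k t = density lborel (\<lambda>s. ennreal (Wk Vpp u k t s))"

primrec Mk :: "(real \<Rightarrow> real) \<Rightarrow> (nat \<Rightarrow> real \<Rightarrow> real) \<Rightarrow> nat \<Rightarrow> real \<Rightarrow> real measure" where
  "Mk Vpp u 0 t = return borel t"
| "Mk Vpp u (Suc n) t = Dk Vpp u (Suc n) t \<bind> Mk Vpp u n"

context
  fixes Vpp :: "real \<Rightarrow> real" and u :: "nat \<Rightarrow> real \<Rightarrow> real" and N :: nat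
  assumes Vpp_nn: "\<And>x. 0 \<le> Vpp x" and Vpp_c: "continuous_on UNIV Vpp"
    and u_c: "\<And>k. 1 \<le> k \<Longrightarrow> k \<le> N \<Longrightarrow> continuous_on {0..} (u k)"
begin

lemma a_cont: "1 \<le> k \<Longrightarrow> k \<le> N \<Longrightarrow> continuous_on {0..t} (\<lambda>x. Vpp (u k x))"
  by (rule continuous_on_compose2[OF Vpp_c continuous_on_subset[OF u_c]]) auto

lemma ak_nn: "0 \<le> ak Vpp u k x"
  unfolding ak_def using Vpp_nn by simp

lemma Wk_nn: "0 \<le> Wk Vpp u k t s"
  unfolding Wk_def using ak_nn by simp

lemma Wk_eq:
  assumes "0 \<le> s" "s \<le> t"
  shows "(LINT x:{s..t}|lborel. ak Vpp u k x) = (LINT x:{s..t}|lborel. Vpp (u k x))"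
    and "Wk Vpp u k t s = exp (- (LINT x:{s..t}|lborel. Vpp (u k x))) * Vpp (u k s)"
proof -
  show 1: "(LINT x:{s..t}|lborel. ak Vpp u k x) = (LINT x:{s..t}|lborel. Vpp (u k x))"
    by (rule set_lebesgue_integral_cong) (use assms in \<open>auto simp: ak_def\<close>)
  show "Wk Vpp u k t s = exp (- (LINT x:{s..t}|lborel. Vpp (u k x))) * Vpp (u k s)"
    unfolding Wk_def 1 using assms by (simp add: ak_def)
qed

lemma Wk_zero: "s \<notin> {0..t} \<Longrightarrow> Wk Vpp u k t s = 0"
  unfolding Wk_def by simp

lemma W_mass:
  assumes k: "1 \<le> k" "k \<le> N" and t: "0 \<le> t"
  shows "(\<integral>\<^sup>+ s. ennreal (Wk Vpp u k t s) \<partial>lborel) \<le> 1"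
proof -
  define a where "a x = Vpp (u k x)" for x
  have ca: "continuous_on {0..t} a" unfolding a_def by (rule a_cont[OF k])
  define A where "A x = integral {0..x} a" for x
  define g where "g s = exp (A s - A t) * a s" for s
  have dA: "(A has_real_derivative a x) (at x within {0..t})" if "x \<in> {0..t}" for x
    using integral_has_vector_derivative[OF ca that] unfolding A_def
    by (simp add: has_real_derivative_iff_has_vector_derivative)
  have eq: "ennreal (Wk Vpp u k t s) = ennreal (g s) * indicator {0..t} s" for s
  proof (cases "s \<in> {0..t}")
    case True
    then have "Wk Vpp u k t s = exp (- (A t - A s)) * a s"
      using Wk_eq(2)[of s t k] lint_A[of s t a] ca by (auto simp: a_def[abs_def] A_def)
    then show ?thesis using True by (simp add: g_def)
  next
    case False then show ?thesis by (simp add: Wk_zero)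
  qed
  have "((\<lambda>s. exp (A s - A t)) has_vector_derivative g x) (at x within {0..t})" if "x \<in> {0..t}" for x
    unfolding has_real_derivative_iff_has_vector_derivative[symmetric] g_def
    by (auto intro!: derivative_eq_intros dA that)
  then have "(g has_integral (exp (A t - A t) - exp (A 0 - A t))) {0..t}"
    by (intro fundamental_theorem_of_calculus t) auto
  then have I: "(g has_integral (1 - exp (- A t))) {0..t}" by (simp add: A_def)
  have "(\<integral>\<^sup>+ s. ennreal (Wk Vpp u k t s) \<partial>lborel) = (\<integral>\<^sup>+ s. ennreal (g s) * indicator {0..t} s \<partial>lborel)"
    by (simp add: eq)
  also have "\<dots> = ennreal (1 - exp (- A t))"
    by (rule nn_integral_has_integral_lebesgue'[OF _ I]) (use Vpp_nn in \<open>auto simp: g_def a_def\<close>)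
  also have "\<dots> \<le> 1" by simp
  finally show ?thesis .
qed

lemma Wk_meas2:
  assumes "1 \<le> k" "k \<le> N"
  shows "(\<lambda>(t, s). Wk Vpp u k t s) \<in> borel_measurable (borel \<Otimes>\<^sub>M borel)"
  by (rule W_meas[where u=u and k=k and Vpp=Vpp, OF u_c[OF assms] Vpp_c])

lemma Wk_meas1:
  assumes "1 \<le> k" "k \<le> N"
  shows "(\<lambda>s. Wk Vpp u k t s) \<in> borel_measurable borel"
  using measurable_compose[OF measurable_Pair[OF measurable_const measurable_ident_sets[OF refl]] Wk_meas2[OF assms]]
  by simp

lemma sets_Dk[simp]: "sets (Dk Vpp u k t) = sets borel"
  by (simp add: Dk_def)

lemma space_Dk[simp]: "space (Dk Vpp u k t) = UNIV"
  by (simp add: Dk_def)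

lemma Dk_sub:
  assumes k: "1 \<le> k" "k \<le> N"
  shows "subprob_space (Dk Vpp u k t)"
proof
  have "emeasure (Dk Vpp u k t) (space (Dk Vpp u k t)) = (\<integral>\<^sup>+ s. ennreal (Wk Vpp u k t s) \<partial>lborel)"
    unfolding Dk_def using Wk_meas1[OF k] by (simp add: emeasure_density)
  also have "\<dots> \<le> 1"
  proof (cases "t \<ge> 0")
    case True then show ?thesis by (rule W_mass[OF k])
  next
    case False
    then have "\<And>s. Wk Vpp u k t s = 0" by (intro Wk_zero) auto
    then show ?thesis by simp
  qed
  finally show "emeasure (Dk Vpp u k t) (space (Dk Vpp u k t)) \<le> 1" .
qed simp

lemma Dk_meas:
  assumes k: "1 \<le> k" "k \<le> N"
  shows "(\<lambda>t. Dk Vpp u k t) \<in> measurable borel (subprob_algebra borel)"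
proof (rule measurable_subprob_algebra)
  fix t show "subprob_space (Dk Vpp u k t)" by (rule Dk_sub[OF k])
next
  fix t show "sets (Dk Vpp u k t) = sets borel" by simp
next
  fix A :: "real set" assume A: "A \<in> sets borel"
  have W2[measurable]: "(\<lambda>(t, s). Wk Vpp u k t s) \<in> borel_measurable (borel \<Otimes>\<^sub>M borel)"
    by (rule Wk_meas2[OF k])
  have "(\<lambda>t. \<integral>\<^sup>+ s. ennreal (Wk Vpp u k t s) * indicator A s \<partial>lborel) \<in> borel_measurable borel"
    using A by measurable
  moreover have "emeasure (Dk Vpp u k t) A = (\<integral>\<^sup>+ s. ennreal (Wk Vpp u k t s) * indicator A s \<partial>lborel)" for t
    unfolding Dk_def using Wk_meas1[OF k] A by (simp add: emeasure_density)
  ultimately show "(\<lambda>t. emeasure (Dk Vpp u k t) A) \<in> borel_measurable borel" by simp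
qed

lemma Mk_meas: "n \<le> N \<Longrightarrow> Mk Vpp u n \<in> measurable borel (subprob_algebra borel)"
proof (induction n)
  case 0
  have "Mk Vpp u 0 = return borel" by (rule ext) simp
  then show ?case by (simp add: return_measurable)
next
  case (Suc n)
  have "Mk Vpp u (Suc n) = (\<lambda>t. Dk Vpp u (Suc n) t \<bind> Mk Vpp u n)" by (rule ext) simp
  moreover have "(\<lambda>t. Dk Vpp u (Suc n) t \<bind> Mk Vpp u n) \<in> measurable borel (subprob_algebra borel)"
    by (rule measurable_bind2[OF Dk_meas Suc.IH]) (use Suc.prems in auto)
  ultimately show ?case by simp
qed

lemma Mk_sets: "n \<le> N \<Longrightarrow> sets (Mk Vpp u n t) = sets borel"
  using sets_kernel[OF Mk_meas] by simp

lemma Mk_subprob: "n \<le> N \<Longrightarrow> subprob_space (Mk Vpp u n t)"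
  using subprob_space_kernel[OF Mk_meas] by simp

lemma Mk_meas_D: "n \<le> N \<Longrightarrow> Mk Vpp u n \<in> measurable (Dk Vpp u k t) (subprob_algebra borel)"
  using Mk_meas by (simp cong: measurable_cong_sets)

lemma Mk_supp: "n \<le> N \<Longrightarrow> s \<in> {0..t} \<Longrightarrow> emeasure (Mk Vpp u n s) (UNIV - {0..t}) = 0"
proof (induction n arbitrary: s)
  case 0 then show ?case by simp
next
  case (Suc n)
  have k: "1 \<le> Suc n" "Suc n \<le> N" using Suc.prems by auto
  have mD: "Mk Vpp u n \<in> measurable (Dk Vpp u (Suc n) s) (subprob_algebra borel)"
    by (rule Mk_meas_D) (use Suc.prems in auto)
  have em: "(\<lambda>r. emeasure (Mk Vpp u n r) (UNIV - {0..t})) \<in> borel_measurable borel"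
    using measurable_emeasure_kernel[OF Mk_meas] Suc.prems by simp
  have "emeasure (Mk Vpp u (Suc n) s) (UNIV - {0..t})
      = (\<integral>\<^sup>+ r. emeasure (Mk Vpp u n r) (UNIV - {0..t}) \<partial>Dk Vpp u (Suc n) s)"
    by (simp add: emeasure_bind[OF _ mD])
  also have "\<dots> = (\<integral>\<^sup>+ r. ennreal (Wk Vpp u (Suc n) s r) * emeasure (Mk Vpp u n r) (UNIV - {0..t}) \<partial>lborel)"
    unfolding Dk_def by (rule nn_integral_density) (use Wk_meas1[OF k] em in auto)
  also have "\<dots> = (\<integral>\<^sup>+ r. 0 \<partial>lborel)"
  proof -
    have "(\<lambda>r. ennreal (Wk Vpp u (Suc n) s r) * emeasure (Mk Vpp u n r) (UNIV - {0..t})) = (\<lambda>r. 0)"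
    proof (rule ext)
      fix r
      show "ennreal (Wk Vpp u (Suc n) s r) * emeasure (Mk Vpp u n r) (UNIV - {0..t}) = 0"
      proof (cases "r \<in> {0..s}")
        case True
        then have "r \<in> {0..t}" using Suc.prems by auto
        then show ?thesis using Suc.IH Suc.prems by simp
      next
        case False then show ?thesis by (simp add: Wk_zero)
      qed
    qed
    then show ?thesis by simp
  qed
  finally show ?case by simp
qed

lemma Mk_int:
  fixes F :: "real \<Rightarrow> real"
  assumes F: "F \<in> borel_measurable borel" and B: "\<And>x. \<bar>F x\<bar> \<le> B"
  shows "n \<le> N \<Longrightarrow> 0 \<le> t \<Longrightarrow> pgE n Vpp u t F = integral\<^sup>L (Mk Vpp u n t) F"
proof (induction n arbitrary: t)
  case 0 then show ?case using F by (simp add: integral_return)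
next
  case (Suc n)
  have k: "1 \<le> Suc n" "Suc n \<le> N" using Suc.prems by auto
  have mD: "Mk Vpp u n \<in> measurable (Dk Vpp u (Suc n) t) (subprob_algebra borel)"
    by (rule Mk_meas_D) (use Suc.prems in auto)
  have im: "(\<lambda>r. integral\<^sup>L (Mk Vpp u n r) F) \<in> borel_measurable borel"
    using measurable_compose[OF Mk_meas integral_measurable_subprob_algebra[OF F]] Suc.prems by simp
  have "integral\<^sup>L (Mk Vpp u (Suc n) t) F = (\<integral>r. integral\<^sup>L (Mk Vpp u n r) F \<partial>Dk Vpp u (Suc n) t)"
    by (simp add: integral_bind_bounded[OF mD Dk_sub[OF k] F B])
  also have "\<dots> = (\<integral>r. Wk Vpp u (Suc n) t r *\<^sub>R integral\<^sup>L (Mk Vpp u n r) F \<partial>lborel)"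
    unfolding Dk_def by (rule integral_density) (use im Wk_meas1[OF k] Wk_nn in auto)
  also have "\<dots> = (\<integral>r. indicator {0..t} r *\<^sub>R
        (exp (- (LINT x:{r..t}|lborel. Vpp (u (Suc n) x))) * Vpp (u (Suc n) r) * pgE n Vpp u r F) \<partial>lborel)"
  proof (rule Bochner_Integration.integral_cong[OF refl])
    fix r :: real
    show "Wk Vpp u (Suc n) t r *\<^sub>R integral\<^sup>L (Mk Vpp u n r) F = indicator {0..t} r *\<^sub>R
        (exp (- (LINT x:{r..t}|lborel. Vpp (u (Suc n) x))) * Vpp (u (Suc n) r) * pgE n Vpp u r F)"
    proof (cases "r \<in> {0..t}")
      case True
      then show ?thesis using Suc.IH[of r] Suc.prems Wk_eq(2)[of r t "Suc n"] by simp
    next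
      case False then show ?thesis by (simp add: Wk_zero)
    qed
  qed
  also have "\<dots> = pgE (Suc n) Vpp u t F"
    by (simp add: set_lebesgue_integral_def)
  finally show ?case by simp
qed

end

lemma pgE_cong:
  "(\<And>s. s \<in> {0..t} \<Longrightarrow> F s = G s) \<Longrightarrow> 0 \<le> t \<Longrightarrow> pgE n Vpp u t F = pgE n Vpp u t G"
proof (induction n arbitrary: t)
  case 0 then show ?case by simp
next
  case (Suc n)
  show ?case unfolding pgE.simps
  proof (rule set_lebesgue_integral_cong; (intro allI impI)?)
    fix s assume s: "s \<in> {0..t}"
    have "pgE n Vpp u s F = pgE n Vpp u s G"
      by (rule Suc.IH) (use s Suc.prems in auto)
    then show "exp (- (LINT r:{s..t}|lborel. Vpp (u (Suc n) r))) * Vpp (u (Suc n) s) * pgE n Vpp u s F =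
          exp (- (LINT r:{s..t}|lborel. Vpp (u (Suc n) r))) * Vpp (u (Suc n) s) * pgE n Vpp u s G" by simp
  qed auto
qed

lemma subprob_integral_le:
  fixes F :: "real \<Rightarrow> real"
  assumes M: "subprob_space M" and sM: "sets M = sets borel" and F: "F \<in> borel_measurable borel"
    and b: "\<And>x. \<bar>F x\<bar> \<le> B" and le: "\<And>x. F x \<le> C" and C: "0 \<le> C"
  shows "integral\<^sup>L M F \<le> C"
proof -
  interpret subprob_space M by fact
  have Fm: "F \<in> borel_measurable M" using F sM by (simp cong: measurable_cong_sets)
  have "integral\<^sup>L M F \<le> integral\<^sup>L M (\<lambda>_. C)"
    by (rule integral_mono) (use Fm b le in \<open>auto intro!: integrable_const_bound[where B=B]\<close>)
  also have "\<dots> = C * measure M (space M)" by simp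
  also have "\<dots> \<le> C" using C subprob_measure_le_1 by (simp add: mult_left_le)
  finally show ?thesis .
qed

lemma subprob_abs_integral_le:
  fixes F :: "real \<Rightarrow> real"
  assumes M: "subprob_space M" and sM: "sets M = sets borel" and F: "F \<in> borel_measurable borel"
    and b: "\<And>x. \<bar>F x\<bar> \<le> C"
  shows "\<bar>integral\<^sup>L M F\<bar> \<le> C"
proof -
  have C: "0 \<le> C" using b[of 0] by simp
  have "integral\<^sup>L M F \<le> C" by (rule subprob_integral_le[OF M sM F b _ C]) (use b in \<open>auto simp: abs_le_iff\<close>)
  moreover have "integral\<^sup>L M (\<lambda>x. - F x) \<le> C"
    by (rule subprob_integral_le[OF M sM _ _ _ C]) (use b F in \<open>auto simp: abs_le_iff\<close>)
  ultimately show ?thesis by (simp add: abs_le_iff)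
qed

theorem proposition6p2:
  fixes V V1 V2 V3 :: "real \<Rightarrow> real"
    and eta theta t :: real and N :: nat
    and B u :: "nat \<Rightarrow> real \<Rightarrow> real"
    and q :: "nat \<Rightarrow> real"
    and f :: "real \<Rightarrow> real"
    and h :: "nat \<Rightarrow> real \<Rightarrow> real"
  assumes V: "oy_type V V1 V2 V3"
    and eta: "eta > 0" and theta: "theta > 0" and N: "N \<ge> 1" and t: "t \<ge> 0"
    and B_cont: "\<And>j. j \<le> N \<Longrightarrow> continuous_on {0..} (B j)"
    and B_0: "\<And>j. j \<le> N \<Longrightarrow> B j 0 = 0"
    and q: "\<And>j. 1 \<le> j \<Longrightarrow> j \<le> N \<Longrightarrow> q j \<in> {0<..<1}"
    and u_init: "\<And>j. 1 \<le> j \<Longrightarrow> j \<le> N \<Longrightarrow> nu_cdf V eta (u j 0) = q j"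
    and u_cont: "\<And>j. 1 \<le> j \<Longrightarrow> j \<le> N \<Longrightarrow> continuous_on {0..} (u j)"
    and u_1: "\<And>s. s \<ge> 0 \<Longrightarrow>
       u 1 s = u 1 0 + integral {0..s} (\<lambda>r. - V1 (u 1 r) - theta) + B 0 s + B 1 s"
    and u_j: "\<And>j s. 2 \<le> j \<Longrightarrow> j \<le> N \<Longrightarrow> s \<ge> 0 \<Longrightarrow>
       u j s = u j 0 + integral {0..s} (\<lambda>r. V1 (u (j - 1) r) - V1 (u j r)) + B j s - B (j - 1) s"
    and f: "piecewise_cont f"
    and h_cont: "\<And>j. 1 \<le> j \<Longrightarrow> j \<le> N \<Longrightarrow> continuous_on {0..} (h j)"
    and h_1: "\<And>s. s \<ge> 0 \<Longrightarrow>
       h 1 s = integral {0..s} (\<lambda>r. - V2 (u 1 r) * h 1 r - f r)"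
    and h_j: "\<And>j s. 2 \<le> j \<Longrightarrow> j \<le> N \<Longrightarrow> s \<ge> 0 \<Longrightarrow>
       h j s = integral {0..s} (\<lambda>r. - V2 (u j r) * h j r + V2 (u (j - 1) r) * h (j - 1) r)"
  shows
    "pgE N V2 u t (\<lambda>s. integral {0..s} f) = (\<Sum>j=1..N. h j t) + integral {0..t} f
     \<and> (\<exists>\<mu> :: real measure. sets \<mu> = sets borel \<and>
          emeasure \<mu> (UNIV - {0..t}) = 0 \<and> emeasure \<mu> UNIV \<le> 1 \<and>
          (\<forall>F. F \<in> borel_measurable borel \<longrightarrow> bounded (F ` {0..}) \<longrightarrow>
               pgE N V2 u t F = (\<integral>s. F s \<partial>\<mu>)))
     \<and> (\<forall>F. F \<in> borel_measurable borel \<longrightarrow> bounded (F ` {0..}) \<longrightarrow>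
               \<bar>pgE N V2 u t F\<bar> \<le> (SUP s\<in>{0..}. \<bar>F s\<bar>))
     \<and> ((\<forall>s\<ge>0. f s \<ge> 0) \<longrightarrow> (\<forall>j\<in>{1..N}. \<forall>t'\<ge>0. h j t' \<le> 0))"
proof -
  have Vnn: "\<And>x. 0 \<le> V2 x" using V2_nonneg[OF V] .
  have Vc: "continuous_on UNIV V2" using V2_cont[OF V] .
  note uc = u_cont
  define a where "a j x = V2 (u j x)" for j x
  have ac: "continuous_on {0..T} (a j)" if "1 \<le> j" "j \<le> N" for j T
    unfolding a_def using a_cont[OF Vnn Vc uc that] .
  have hc: "continuous_on {0..T} (h j)" if "1 \<le> j" "j \<le> N" for j T
    using h_cont[OF that] by (rule continuous_on_subset) auto
  define F where "F s = integral {0..s} f" for s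
  have fi: "f integrable_on {0..s}" if "0 \<le> s" for s using pc_integrable[OF f that] .
  have Fc: "continuous_on {0..T} F" if "0 \<le> T" for T
    unfolding F_def using indefinite_integral_continuous_1[OF fi[OF that]] .
  have ahi: "(\<lambda>r. a j r * h j r) integrable_on {0..s}" if "1 \<le> j" "j \<le> N" for j s
    by (intro integrable_continuous_interval continuous_intros ac hc that)
  \<comment> \<open>telescoping\<close>
  have tel: "F s + (\<Sum>j=1..m. h j s) = integral {0..s} (\<lambda>r. - a m r * h m r)"
    if "1 \<le> m" "m \<le> N" "0 \<le> s" for m s
    using that
  proof (induction m)
    case 0 then show ?case by simp
  next
    case (Suc m)
    show ?case
    proof (cases "m = 0")
      case True
      have i1: "(\<lambda>r. - a 1 r * h 1 r - f r) integrable_on {0..s}"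
        using integrable_neg[OF ahi[of 1 s]] fi[OF Suc.prems(3)] N
        by (intro integrable_diff) auto
      have "F s + h 1 s = integral {0..s} f + integral {0..s} (\<lambda>r. - a 1 r * h 1 r - f r)"
        unfolding F_def h_1[OF Suc.prems(3)] a_def by simp
      also have "\<dots> = integral {0..s} (\<lambda>r. f r + (- a 1 r * h 1 r - f r))"
        by (rule Henstock_Kurzweil_Integration.integral_add[symmetric, OF fi[OF Suc.prems(3)] i1])
      also have "\<dots> = integral {0..s} (\<lambda>r. - a 1 r * h 1 r)" by simp
      finally show ?thesis using True by simp
    next
      case False
      then have m1: "1 \<le> m" and mN: "m \<le> N" using Suc.prems by auto
      have hs: "h (Suc m) s = integral {0..s} (\<lambda>r. - a (Suc m) r * h (Suc m) r + a m r * h m r)"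
        unfolding a_def using h_j[of "Suc m" s] Suc.prems m1 by simp
      have "F s + (\<Sum>j=1..Suc m. h j s) = (F s + (\<Sum>j=1..m. h j s)) + h (Suc m) s"
        by simp
      also have "\<dots> = integral {0..s} (\<lambda>r. - a m r * h m r)
          + integral {0..s} (\<lambda>r. - a (Suc m) r * h (Suc m) r + a m r * h m r)"
        using Suc.IH[OF m1 mN Suc.prems(3)] hs by simp
      also have "\<dots> = integral {0..s} (\<lambda>r. - a m r * h m r + (- a (Suc m) r * h (Suc m) r + a m r * h m r))"
      proof -
        have k: "1 \<le> Suc m" "Suc m \<le> N" using Suc.prems by auto
        have i1: "(\<lambda>r. - a m r * h m r) integrable_on {0..s}"
          using integrable_neg[OF ahi[OF m1 mN]] by simp
        have i2: "(\<lambda>r. - a (Suc m) r * h (Suc m) r + a m r * h m r) integrable_on {0..s}"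
          using integrable_add[OF integrable_neg[OF ahi[OF k]] ahi[OF m1 mN]] by simp
        show ?thesis by (rule Henstock_Kurzweil_Integration.integral_add[OF i1 i2, symmetric])
      qed
      also have "\<dots> = integral {0..s} (\<lambda>r. - a (Suc m) r * h (Suc m) r)" by simp
      finally show ?thesis .
    qed
  qed
  define Hn where "Hn m s = F s + (\<Sum>j=1..m. h j s)" for m s
  have Hc: "continuous_on {0..T} (Hn m)" if "m \<le> N" "0 \<le> T" for m T
    unfolding Hn_def[abs_def] using that
    by (intro continuous_intros Fc continuous_on_sum hc) auto
  have partI: "pgE n V2 u s F = Hn n s" if "n \<le> N" "0 \<le> s" for n s
    using that
  proof (induction n arbitrary: s)
    case 0 then show ?case by (simp add: Hn_def)
  next
    case (Suc n)
    have k: "1 \<le> Suc n" "Suc n \<le> N" using Suc.prems by auto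
    have "pgE (Suc n) V2 u s F
        = (LINT r:{0..s}|lborel. exp (- (LINT x:{r..s}|lborel. a (Suc n) x)) * (a (Suc n) r * Hn n r))"
      unfolding pgE.simps
    proof (rule set_lebesgue_integral_cong; (intro allI impI)?)
      fix r assume r: "r \<in> {0..s}"
      then show "exp (- (LINT x:{r..s}|lborel. V2 (u (Suc n) x))) * V2 (u (Suc n) r) * pgE n V2 u r F =
        exp (- (LINT x:{r..s}|lborel. a (Suc n) x)) * (a (Suc n) r * Hn n r)"
        using Suc.IH[of r] Suc.prems by (simp add: a_def)
    qed simp
    also have "\<dots> = Hn (Suc n) s"
    proof (rule ode_rep[symmetric, OF Suc.prems(2) ac[OF k]])
      show "continuous_on {0..s} (\<lambda>r. a (Suc n) r * Hn n r)"
        using Suc.prems by (intro continuous_intros ac[OF k] Hc) auto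
      show "continuous_on {0..s} (Hn (Suc n))" using Suc.prems by (intro Hc) auto
      fix r assume r: "r \<in> {0..s}"
      have "Hn (Suc n) r = integral {0..r} (\<lambda>x. - a (Suc n) x * h (Suc n) x)"
        unfolding Hn_def using tel[OF k] r by simp
      also have "\<dots> = integral {0..r} (\<lambda>x. a (Suc n) x * Hn n x - a (Suc n) x * Hn (Suc n) x)"
        by (simp add: Hn_def algebra_simps)
      finally show "Hn (Suc n) r = integral {0..r} (\<lambda>x. a (Suc n) x * Hn n x - a (Suc n) x * Hn (Suc n) x)" .
    qed
    finally show ?case .
  qed
  have P1: "pgE N V2 u t (\<lambda>s. integral {0..s} f) = (\<Sum>j=1..N. h j t) + integral {0..t} f"
    using partI[OF order.refl t] unfolding Hn_def F_def[abs_def] by simp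
  define \<mu> where "\<mu> = Mk V2 u N t"
  have s\<mu>: "sets \<mu> = sets borel" unfolding \<mu>_def by (rule Mk_sets[OF Vnn Vc uc order.refl])
  have sp\<mu>: "space \<mu> = UNIV" using sets_eq_imp_space_eq[OF s\<mu>] by simp
  have sub\<mu>: "subprob_space \<mu>" unfolding \<mu>_def by (rule Mk_subprob[OF Vnn Vc uc order.refl])
  have supp: "emeasure \<mu> (UNIV - {0..t}) = 0" unfolding \<mu>_def
    by (rule Mk_supp[OF Vnn Vc uc order.refl]) (use t in auto)
  have AEt: "AE x in \<mu>. x \<in> {0..t}"
    by (subst AE_iff_measurable[where N="UNIV - {0..t}"]) (use s\<mu> sp\<mu> supp in auto)
  have mass: "emeasure \<mu> UNIV \<le> 1"
    using subprob_space.emeasure_space_le_1[OF sub\<mu>] sp\<mu> by simp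
  have rep: "pgE N V2 u t F = (\<integral>s. indicator {0..} s * F s \<partial>\<mu>)"
    and abs_le: "\<bar>pgE N V2 u t F\<bar> \<le> (SUP s\<in>{0..}. \<bar>F s\<bar>)"
    if F: "F \<in> borel_measurable borel" and bF: "bounded (F ` {0..})" for F :: "real \<Rightarrow> real"
  proof -
    define F' where "F' s = indicator {0..} s * F s" for s
    have F'm: "F' \<in> borel_measurable borel" unfolding F'_def[abs_def] using F by measurable
    have bdd: "bdd_above ((\<lambda>s. \<bar>F s\<bar>) ` {0..})"
      using bF unfolding bounded_real bdd_above_def by (auto simp: image_iff)
    define S where "S = (SUP s\<in>{0..}. \<bar>F s\<bar>)"
    have FS: "\<bar>F s\<bar> \<le> S" if "0 \<le> s" for s
      unfolding S_def using that by (intro cSUP_upper[OF _ bdd]) auto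
    have S0: "0 \<le> S" using FS[of 0] by simp
    have F'S: "\<bar>F' x\<bar> \<le> S" for x using FS[of x] S0 by (auto simp: F'_def indicator_def)
    have "pgE N V2 u t F = pgE N V2 u t F'"
      by (rule pgE_cong) (use t in \<open>auto simp: F'_def\<close>)
    also have "\<dots> = integral\<^sup>L \<mu> F'" unfolding \<mu>_def
      by (rule Mk_int[OF Vnn Vc uc F'm F'S order.refl t])
    finally have eq: "pgE N V2 u t F = integral\<^sup>L \<mu> F'" .
    then show "pgE N V2 u t F = (\<integral>s. indicator {0..} s * F s \<partial>\<mu>)" by (simp add: F'_def[abs_def])
    show "\<bar>pgE N V2 u t F\<bar> \<le> (SUP s\<in>{0..}. \<bar>F s\<bar>)"
      unfolding eq S_def[symmetric] by (rule subprob_abs_integral_le[OF sub\<mu> s\<mu> F'm F'S])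
  qed
  have P2: "\<exists>\<mu> :: real measure. sets \<mu> = sets borel \<and>
          emeasure \<mu> (UNIV - {0..t}) = 0 \<and> emeasure \<mu> UNIV \<le> 1 \<and>
          (\<forall>F. F \<in> borel_measurable borel \<longrightarrow> bounded (F ` {0..}) \<longrightarrow>
               pgE N V2 u t F = (\<integral>s. F s \<partial>\<mu>))"
  proof (intro exI conjI allI impI)
    show "sets \<mu> = sets borel" "emeasure \<mu> (UNIV - {0..t}) = 0" "emeasure \<mu> UNIV \<le> 1"
      by fact+
    fix F :: "real \<Rightarrow> real" assume F: "F \<in> borel_measurable borel" and bF: "bounded (F ` {0..})"
    have "(\<integral>s. indicator {0..} s * F s \<partial>\<mu>) = (\<integral>s. F s \<partial>\<mu>)"
      by (rule integral_cong_AE) (use F s\<mu> AEt in \<open>auto simp: indicator_def cong: measurable_cong_sets\<close>)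
    then show "pgE N V2 u t F = (\<integral>s. F s \<partial>\<mu>)" using rep[OF F bF] by simp
  qed
  have P3: "\<forall>F. F \<in> borel_measurable borel \<longrightarrow> bounded (F ` {0..}) \<longrightarrow>
               \<bar>pgE N V2 u t F\<bar> \<le> (SUP s\<in>{0..}. \<bar>F s\<bar>)"
    using abs_le by blast
  have P4: "\<forall>j\<in>{1..N}. \<forall>t'\<ge>0. h j t' \<le> 0" if fnn: "\<forall>s\<ge>0. f s \<ge> 0"
  proof -
    have main: "\<forall>t'\<ge>0. h j t' \<le> 0" if "1 \<le> j" "j \<le> N" for j
      using that
    proof (induction j)
      case 0 then show ?case by simp
    next
      case (Suc m)
      show ?case
      proof (cases "m = 0")
        case True
        show ?thesis
        proof (intro allI impI)
          fix t' :: real assume t': "0 \<le> t'"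
          have Fmono: "F x \<le> F y" if "0 \<le> x" "x \<le> y" for x y
            unfolding F_def
            by (rule integral_subset_le) (use that fi fnn in auto)
          have F0: "0 \<le> F x" if "0 \<le> x" for x
            unfolding F_def using that fnn by (intro integral_nonneg fi) auto
          define G where "G s = F (max 0 (min s t'))" for s
          have Gc: "continuous_on UNIV G" unfolding G_def
            by (rule continuous_on_compose2[OF Fc[OF t']]) (auto intro!: continuous_intros simp: t')
          have Gm: "G \<in> borel_measurable borel" using Gc by (rule borel_measurable_continuous_onI)
          obtain BB where BB: "\<forall>x\<in>{0..t'}. \<bar>F x\<bar> \<le> BB"
            using compact_imp_bounded[OF compact_continuous_image[OF Fc[OF t'] compact_Icc]]
            unfolding bounded_real by auto
          have Gb: "\<bar>G x\<bar> \<le> BB" for x unfolding G_def using BB t' by auto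
          have Gle: "G x \<le> F t'" for x unfolding G_def using t' by (intro Fmono) auto
          have "h 1 t' = Hn 1 t' - F t'" by (simp add: Hn_def)
          also have "Hn 1 t' = pgE 1 V2 u t' F" using partI[of 1 t'] N t' by simp
          also have "\<dots> = pgE 1 V2 u t' G"
            by (rule pgE_cong) (use t' in \<open>auto simp: G_def\<close>)
          also have "\<dots> = integral\<^sup>L (Mk V2 u 1 t') G"
            by (rule Mk_int[OF Vnn Vc uc Gm Gb]) (use N t' in auto)
          also have "\<dots> \<le> F t'"
            by (rule subprob_integral_le[OF Mk_subprob[OF Vnn Vc uc] Mk_sets[OF Vnn Vc uc] Gm Gb Gle F0[OF t']])
              (use N in auto)
          finally show "h (Suc m) t' \<le> 0" using True by simp
        qed
      next
        case False
        then have m1: "1 \<le> m" and mN: "m \<le> N" and k: "1 \<le> Suc m" "Suc m \<le> N" using Suc.prems by auto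
        have IH: "\<forall>t'\<ge>0. h m t' \<le> 0" using Suc.IH[OF m1 mN] .
        show ?thesis
        proof (intro allI impI)
          fix t' :: real assume t': "0 \<le> t'"
          have "h (Suc m) t' = (LINT s:{0..t'}|lborel. exp (- (LINT x:{s..t'}|lborel. a (Suc m) x)) * (a m s * h m s))"
          proof (rule ode_rep[OF t' ac[OF k]])
            show "continuous_on {0..t'} (\<lambda>r. a m r * h m r)"
              by (intro continuous_intros ac[OF m1 mN] hc[OF m1 mN])
            show "continuous_on {0..t'} (h (Suc m))" by (rule hc[OF k])
            fix r assume r: "r \<in> {0..t'}"
            show "h (Suc m) r = integral {0..r} (\<lambda>x. a m x * h m x - a (Suc m) x * h (Suc m) x)"
              using h_j[of "Suc m" r] r k m1 by (simp add: a_def algebra_simps)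
          qed
          also have "\<dots> \<le> 0"
          proof -
            define g where "g s = exp (- (LINT x:{s..t'}|lborel. a (Suc m) x)) * (a m s * h m s)" for s
            have "0 \<le> (\<integral>s. - (indicator {0..t'} s *\<^sub>R g s) \<partial>lborel)"
            proof (rule integral_nonneg_AE, rule AE_I2)
              fix s
              show "0 \<le> - (indicator {0..t'} s *\<^sub>R g s)"
              proof (cases "s \<in> {0..t'}")
                case True
                then have "h m s \<le> 0" using IH by auto
                moreover have "0 \<le> a m s" using Vnn by (simp add: a_def)
                ultimately have "a m s * h m s \<le> 0" by (simp add: mult_nonneg_nonpos)
                then have "g s \<le> 0" unfolding g_def by (simp add: mult_nonneg_nonpos)
                then show ?thesis using True by simp
              qed simp
            qed
            then have "(LINT s:{0..t'}|lborel. g s) \<le> 0"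
              unfolding set_lebesgue_integral_def by (simp add: Bochner_Integration.integral_minus)
            then show ?thesis by (simp add: g_def)
          qed
          finally show "h (Suc m) t' \<le> 0" .
        qed
      qed
    qed
    then show ?thesis by auto
  qed
  show ?thesis using P1 P2 P3 P4 by blast
qed

end
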